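(* Let $\Gamma=(\gamma_{i,j})\in\mathcal{M}_n(\mathbb{R})$ be symmetric with entries in $[0,1]$, zero diagonal, and at least one strictly positive off-diagonal entry in each row. Let $\boldsymbol{\eta}=\Gamma\mathbf{1}_n$, $L=\operatorname{diag}(\boldsymbol{\eta})-\Gamma$, let $\lambda,\mu>0$, and $A=(a_{i,j})=\lambda\mathsf{I}_n+\mu L$. Define $\mathsf{P}_a\coloneqq\lambda\mathsf{I}_n+\mu\operatorname{diag}(\boldsymbol{\eta})$ and $\mathsf{P}_b\coloneqq\operatorname{diag}\big([\sum_{j=1}^n a_{i,j}^2]^{1/2}\big)_{i=1,\dots,n}$. Then every eigenvalue $\theta$ of $\mathsf{P}_b^{-1}A$ satisfies \[ 2^{-1/2}\,\lambda_{\min}(\mathsf{P}_a^{-1}A)\le\theta\le\lambda_{\max}(\mathsf{P}_a^{-1}A). \]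
   Context: $\mathbf{1}_n$ is the all-ones vector and $\mathsf{I}_n$ the identity. $\lambda_{\min}(M)$ and $\lambda_{\max}(M)$ denote the smallest and largest eigenvalues of $M$ (the matrices $\mathsf{P}^{-1}A$ here are similar to symmetric positive definite matrices, so their eigenvalues are real and positive). *)

theory Defs
  imports "HOL-Analysis.Analysis"
begin

definition diagm :: "real ^ 'n \<Rightarrow> real ^ 'n ^ 'n" where
  "diagm v = (\<chi> i j. if i = j then v $ i else 0)"

definition cmat :: "real ^ 'n ^ 'n \<Rightarrow> complex ^ 'n ^ 'n" where
  "cmat M = (\<chi> i j. complex_of_real (M $ i $ j))"

definition is_eigenvalue :: "real ^ 'n ^ 'n \<Rightarrow> complex \<Rightarrow> bool" where
  "is_eigenvalue M \<theta> \<longleftrightarrow> (\<exists>v :: complex ^ 'n. v \<noteq> 0 \<and> cmat M *v v = \<theta> *s v)"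

text \<open>Smallest / largest eigenvalue, for matrices with real spectrum.\<close>
definition lambda_min :: "real ^ 'n ^ 'n \<Rightarrow> real" where
  "lambda_min M = Min {t :: real. is_eigenvalue M (complex_of_real t)}"

definition lambda_max :: "real ^ 'n ^ 'n \<Rightarrow> real" where
  "lambda_max M = Max {t :: real. is_eigenvalue M (complex_of_real t)}"

end

theory Submission
  imports Defs
begin


lemma if0_mult: "(if P then a else (0::real)) * b = (if P then a * b else 0)" by simp
lemma mult_if0: "b * (if P then a else (0::real)) = (if P then b * a else 0)" by simp

lemma diagm_mul: "diagm d ** diagm e = diagm (\<chi> i. d$i * e$i)"
  by (simp add: matrix_matrix_mult_def diagm_def vec_eq_iff if0_mult mult_if0)

lemma diagm_mv: "diagm d *v x = (\<chi> i. d$i * x$i)"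
  by (simp add: matrix_vector_mult_def diagm_def vec_eq_iff if0_mult)

lemma diagm_one: "(\<forall>i. d$i = 1) \<Longrightarrow> diagm d = mat 1"
  by (simp add: diagm_def mat_def vec_eq_iff)

lemma matrix_inv_eqI:
  fixes A B :: "real^'n^'n"
  assumes "A ** B = mat 1" "B ** A = mat 1"
  shows "matrix_inv A = B"
proof -
  have "A ** matrix_inv A = mat 1 \<and> matrix_inv A ** A = mat 1"
    unfolding matrix_inv_def by (rule someI[of _ B]) (use assms in auto)
  then have "matrix_inv A = matrix_inv A ** (A ** B)" using assms by simp
  also have "\<dots> = B" by (simp add: matrix_mul_assoc \<open>_ \<and> _\<close>)
  finally show ?thesis .
qed

lemma matrix_inv_diagm:
  assumes "\<And>i. d$i \<noteq> (0::real)"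
  shows "matrix_inv (diagm d) = diagm (\<chi> i. 1 / d$i)"
  by (rule matrix_inv_eqI) (simp_all add: diagm_mul assms diagm_one)

lemma bil_sum: "x \<bullet> (M *v y) = (\<Sum>i\<in>UNIV. \<Sum>j\<in>UNIV. x$i * M$i$j * y$j)"
  by (simp add: inner_vec_def matrix_vector_mult_def sum_distrib_left mult.assoc)

lemma bil_sym:
  assumes "\<And>i j. C$i$j = C$j$i"
  shows "x \<bullet> (C *v y) = y \<bullet> (C *v (x::real^'n))"
  unfolding bil_sum
  by (subst sum.swap) (simp add: assms mult.commute mult.left_commute)

lemma N_sum: "x \<bullet> (diagm d *v x) = (\<Sum>i\<in>UNIV. d$i * (x$i)^2)"
  by (simp add: diagm_mv inner_vec_def power2_eq_square mult_ac)

lemma N_pos: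
  assumes "\<And>i. d$i > (0::real)" "x \<noteq> 0"
  shows "x \<bullet> (diagm d *v x) > 0"
proof -
  obtain k where k: "x$k \<noteq> 0" using assms(2) by (auto simp: vec_eq_iff)
  have "0 < d$k * (x$k)^2" using k assms(1)[of k] by simp
  also have "\<dots> \<le> (\<Sum>i\<in>UNIV. d$i * (x$i)^2)"
    by (rule member_le_sum) (auto intro!: mult_nonneg_nonneg less_imp_le[OF assms(1)])
  finally show ?thesis by (simp add: N_sum)
qed

lemma quadlem:
  fixes b c :: real
  assumes "\<And>s. 0 \<le> 2 * s * b + s^2 * c"
  shows "b = 0"
proof (rule ccontr)
  assume nb: "b \<noteq> 0"
  define k where "k = \<bar>c\<bar> + 1"
  have kp: "k > 0" by (simp add: k_def)
  have "0 \<le> 2*(-b/k)*b + (-b/k)^2*c" by (rule assms)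
  also have "\<dots> = (b^2/k^2) * (c - 2*k)" using kp by (simp add: field_simps power2_eq_square)
  also have "\<dots> < 0"
    using nb kp by (intro mult_pos_neg) (auto simp: k_def)
  finally show False by simp
qed



lemma eig_char:
  fixes A :: "real^'n^'n"
  assumes d: "\<And>i. d$i \<noteq> 0"
  shows "is_eigenvalue (matrix_inv (diagm d) ** A) \<theta> \<longleftrightarrow>
    (\<exists>v. v \<noteq> 0 \<and> (\<forall>i. (\<Sum>j\<in>UNIV. of_real (A$i$j) * v$j) = \<theta> * of_real (d$i) * v$i))"
proof -
  have row: "(cmat (matrix_inv (diagm d) ** A) *v v) $ i = of_real (1 / d$i) * (\<Sum>j\<in>UNIV. of_real (A$i$j) * v$j)"
    for v :: "complex^'n" and i
    unfolding matrix_inv_diagm[OF d]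
    by (simp add: cmat_def matrix_vector_mult_def matrix_matrix_mult_def
        diagm_def if0_mult sum_distrib_left mult.assoc)
  have eq: "(cmat (matrix_inv (diagm d) ** A) *v v = \<theta> *s v) \<longleftrightarrow>
     (\<forall>i. (\<Sum>j\<in>UNIV. of_real (A$i$j) * v$j) = \<theta> * of_real (d$i) * v$i)" for v :: "complex^'n"
  proof -
    have "(of_real (1 / d$i) * s = \<theta> * v$i) \<longleftrightarrow> (s = \<theta> * of_real (d$i) * v$i)" for s i
      using d[of i] by (auto simp: field_simps)
    then show ?thesis by (simp add: vec_eq_iff row)
  qed
  show ?thesis unfolding is_eigenvalue_def eq ..
qed

lemma real_eig:
  fixes A :: "real^'n^'n"
  assumes d: "\<And>i. d$i \<noteq> 0" and w: "w \<noteq> 0" and e: "A *v w = t *\<^sub>R (diagm d *v w)"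
  shows "is_eigenvalue (matrix_inv (diagm d) ** A) (of_real t)"
  unfolding eig_char[OF d]
proof (intro exI[of _ "\<chi> i. of_real (w$i)"] conjI allI)
  show "(\<chi> i. complex_of_real (w $ i)) \<noteq> 0" using w by (auto simp: vec_eq_iff)
  fix i
  have "(A *v w)$i = (t *\<^sub>R (diagm d *v w))$i" using e by simp
  then have "(\<Sum>j\<in>UNIV. A$i$j * w$j) = t * d$i * w$i"
    unfolding diagm_mv by (simp add: matrix_vector_mult_def mult.assoc)
  then have "of_real (\<Sum>j\<in>UNIV. A$i$j * w$j) = (of_real (t * d$i * w$i) :: complex)" by simp
  then show "(\<Sum>j\<in>UNIV. complex_of_real (A $ i $ j) * (\<chi> i. complex_of_real (w $ i)) $ j) =
         complex_of_real t * complex_of_real (d $ i) * (\<chi> i. complex_of_real (w $ i)) $ i"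
    by simp
qed

lemma extract_real:
  fixes A :: "real^'n^'n" and v :: "complex^'n"
  assumes v: "v \<noteq> 0" and e: "\<And>i. (\<Sum>j\<in>UNIV. of_real (A$i$j) * v$j) = of_real t * of_real (d$i) * v$i"
  shows "\<exists>w. w \<noteq> 0 \<and> A *v w = t *\<^sub>R (diagm d *v w)"
proof -
  define x where "x = (\<chi> i. Re (v$i))"
  define y where "y = (\<chi> i. Im (v$i))"
  have ex: "A *v x = t *\<^sub>R (diagm d *v x)"
  proof -
    have "Re (\<Sum>j\<in>UNIV. of_real (A$i$j) * v$j) = Re (of_real t * of_real (d$i) * v$i)" for i
      using e by simp
    then show ?thesis unfolding diagm_mv by (simp add: vec_eq_iff x_def matrix_vector_mult_def Re_sum mult.assoc)
  qed
  have ey: "A *v y = t *\<^sub>R (diagm d *v y)"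
  proof -
    have "Im (\<Sum>j\<in>UNIV. of_real (A$i$j) * v$j) = Im (of_real t * of_real (d$i) * v$i)" for i
      using e by simp
    then show ?thesis unfolding diagm_mv by (simp add: vec_eq_iff y_def matrix_vector_mult_def Im_sum mult.assoc)
  qed
  have "x \<noteq> 0 \<or> y \<noteq> 0"
  proof (rule ccontr)
    assume "\<not> ?thesis"
    then have "v = 0" by (auto simp: vec_eq_iff x_def y_def complex_eq_iff)
    then show False using v by simp
  qed
  then show ?thesis using ex ey by blast
qed

lemma lagrange:
  fixes C :: "real^'n^'n"
  assumes sym: "\<And>i j. C$i$j = C$j$i" and nn: "\<And>x. 0 \<le> x \<bullet> (C *v x)" and w: "w \<bullet> (C *v w) = 0"
  shows "C *v w = 0"
proof -
  define h where "h = C *v w"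
  have "0 \<le> 2 * s * (h \<bullet> h) + s^2 * (h \<bullet> (C *v h))" for s
  proof -
    have "0 \<le> (w + s *\<^sub>R h) \<bullet> (C *v (w + s *\<^sub>R h))" by (rule nn)
    also have "\<dots> = w \<bullet> (C *v w) + s * (h \<bullet> (C *v w)) + s * (w \<bullet> (C *v h)) + s^2 * (h \<bullet> (C *v h))"
      by (simp add: algebra_simps inner_add_left inner_add_right power2_eq_square)
    also have "\<dots> = 2 * s * (h \<bullet> h) + s^2 * (h \<bullet> (C *v h))"
      using w bil_sym[OF sym, of w h] by (simp add: h_def)
    finally show ?thesis .
  qed
  then have "h \<bullet> h = 0" by (rule quadlem)
  then show ?thesis by (simp add: h_def)
qed



lemma diagm_sym: "diagm d $ i $ j = diagm d $ j $ i"
  by (simp add: diagm_def)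

lemma eig_orth:
  fixes A :: "real^'n^'n"
  assumes sym: "\<And>i j. A$i$j = A$j$i"
    and u: "A *v u = s *\<^sub>R (diagm d *v u)" and w: "A *v w = t *\<^sub>R (diagm d *v w)" and st: "s \<noteq> t"
  shows "u \<bullet> (diagm d *v w) = 0"
proof -
  have "t * (u \<bullet> (diagm d *v w)) = u \<bullet> (A *v w)" using w by simp
  also have "\<dots> = w \<bullet> (A *v u)" by (rule bil_sym[OF sym])
  also have "\<dots> = s * (w \<bullet> (diagm d *v u))" using u by simp
  also have "\<dots> = s * (u \<bullet> (diagm d *v w))" using bil_sym[of "diagm d", OF diagm_sym] by simp
  finally show ?thesis using st by simp
qed

lemma finite_eigs:
  fixes A :: "real^'n^'n"
  assumes sym: "\<And>i j. A$i$j = A$j$i" and dpos: "\<And>i. d$i > 0"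
  shows "finite {t. \<exists>w. w \<noteq> 0 \<and> A *v w = t *\<^sub>R (diagm d *v w)}" (is "finite ?S")
proof -
  define W where "W t = (SOME w. w \<noteq> 0 \<and> A *v w = t *\<^sub>R (diagm d *v w))" for t
  have W: "W t \<noteq> 0 \<and> A *v W t = t *\<^sub>R (diagm d *v W t)" if "t \<in> ?S" for t
    using that unfolding W_def mem_Collect_eq by (rule someI_ex)
  define g where "g t = (\<chi> i. sqrt (d$i) * W t $ i)" for t
  have gi: "g s \<bullet> g t = W s \<bullet> (diagm d *v W t)" for s t
    using dpos by (simp add: g_def inner_vec_def diagm_mv mult_ac less_imp_le)
  have g0: "g t \<noteq> 0" if "t \<in> ?S" for t
  proof
    assume "g t = 0"
    then have "W t \<bullet> (diagm d *v W t) = 0" using gi[of t t] by simp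
    then show False using N_pos[OF dpos] W[OF that] by (metis less_irrefl)
  qed
  have go: "g s \<bullet> g t = 0" if "s \<in> ?S" "t \<in> ?S" "s \<noteq> t" for s t
    unfolding gi using eig_orth[OF sym _ _ that(3)] W that(1,2) by blast
  have inj: "inj_on g ?S"
  proof (rule inj_onI)
    fix s t assume st: "s \<in> ?S" "t \<in> ?S" "g s = g t"
    show "s = t"
    proof (rule ccontr)
      assume "s \<noteq> t"
      then have "g s \<bullet> g s = 0" using go[OF st(1,2)] st(3) by simp
      then show False using g0[OF st(1)] by simp
    qed
  qed
  have "pairwise orthogonal (g ` ?S)"
    unfolding pairwise_def orthogonal_def using go by auto
  then have "finite (g ` ?S)" by (rule pairwise_orthogonal_imp_finite)
  then show ?thesis using inj finite_imageD by blast
qed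



lemma quad_scale: "(c *\<^sub>R x) \<bullet> (M *v (c *\<^sub>R x)) = c^2 * (x \<bullet> (M *v (x::real^'n)))"
  by (simp add: matrix_vector_mult_scaleR power2_eq_square)

lemma ratio_scale:
  fixes x :: "real^'n"
  assumes "x \<noteq> 0"
  shows "((x /\<^sub>R norm x) \<bullet> (A *v (x /\<^sub>R norm x))) / ((x /\<^sub>R norm x) \<bullet> (D *v (x /\<^sub>R norm x)))
       = (x \<bullet> (A *v x)) / (x \<bullet> (D *v x))"
proof -
  have "(inverse (norm x))^2 \<noteq> 0" using assms by simp
  then show ?thesis by (simp only: quad_scale) simp
qed

lemma cont_quad: "continuous_on S (\<lambda>x. x \<bullet> (M *v (x::real^'n)))"
  by (intro continuous_on_inner continuous_on_id linear_continuous_on matrix_vector_mul_bounded_linear)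

lemma sphere_ne: "sphere (0::real^'n) 1 \<noteq> {}"
  by simp

lemma extremal:
  fixes A :: "real^'n^'n"
  assumes sym: "\<And>i j. A$i$j = A$j$i" and dpos: "\<And>i. d$i > 0"
  shows "\<exists>t w. w \<noteq> 0 \<and> A *v w = t *\<^sub>R (diagm d *v w) \<and> (\<forall>x. t * (x \<bullet> (diagm d *v x)) \<le> x \<bullet> (A *v x))"
    and "\<exists>t w. w \<noteq> 0 \<and> A *v w = t *\<^sub>R (diagm d *v w) \<and> (\<forall>x. x \<bullet> (A *v x) \<le> t * (x \<bullet> (diagm d *v x)))"
proof -
  define f where "f x = (x \<bullet> (A *v x)) / (x \<bullet> (diagm d *v x))" for x :: "real^'n"
  have Npos: "x \<bullet> (diagm d *v x) > 0" if "x \<noteq> 0" for x using N_pos[OF dpos that] .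
  have cont: "continuous_on (sphere 0 1) f"
    unfolding f_def
  proof (intro continuous_on_divide cont_quad ballI)
    fix x :: "real^'n" assume "x \<in> sphere 0 1"
    then have "x \<noteq> 0" by auto
    then show "x \<bullet> (diagm d *v x) \<noteq> 0" using Npos by (metis less_irrefl)
  qed
  have dsym: "\<And>i j. (A - t *\<^sub>R diagm d)$i$j = (A - t *\<^sub>R diagm d)$j$i"
       "\<And>i j. (t *\<^sub>R diagm d - A)$i$j = (t *\<^sub>R diagm d - A)$j$i" for t
    using sym diagm_sym[of d] by auto
  have fx: "f x = f (x /\<^sub>R norm x)" "x /\<^sub>R norm x \<in> sphere 0 1" if "x \<noteq> 0" for x
    using that by (simp only: f_def ratio_scale[OF that]) (simp add: that)
  show "\<exists>t w. w \<noteq> 0 \<and> A *v w = t *\<^sub>R (diagm d *v w) \<and> (\<forall>x. t * (x \<bullet> (diagm d *v x)) \<le> x \<bullet> (A *v x))"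
  proof -
    obtain w where w: "w \<in> sphere 0 1" and wm: "\<And>y. y \<in> sphere 0 1 \<Longrightarrow> f w \<le> f y"
      using continuous_attains_inf[OF compact_sphere sphere_ne cont] by blast
    have w0: "w \<noteq> 0" using w by auto
    define t where "t = f w"
    have le: "t * (x \<bullet> (diagm d *v x)) \<le> x \<bullet> (A *v x)" for x
    proof (cases "x = 0")
      case False
      then have "t \<le> f x" using wm fx[OF False] by (simp add: t_def)
      then show ?thesis using Npos[OF False] by (simp add: f_def pos_le_divide_eq)
    qed simp
    have "(A - t *\<^sub>R diagm d) *v w = 0"
    proof (rule lagrange[OF dsym(1)])
      show "0 \<le> x \<bullet> ((A - t *\<^sub>R diagm d) *v x)" for x
        using le[of x] by (simp add: matrix_vector_mult_diff_rdistrib scaleR_matrix_vector_assoc[symmetric] inner_diff_right)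
      show "w \<bullet> ((A - t *\<^sub>R diagm d) *v w) = 0"
        using Npos[OF w0] by (simp add: t_def f_def matrix_vector_mult_diff_rdistrib scaleR_matrix_vector_assoc[symmetric] inner_diff_right)
    qed
    then have "A *v w = t *\<^sub>R (diagm d *v w)"
      by (simp add: matrix_vector_mult_diff_rdistrib scaleR_matrix_vector_assoc[symmetric])
    then show ?thesis using w0 le by blast
  qed
  show "\<exists>t w. w \<noteq> 0 \<and> A *v w = t *\<^sub>R (diagm d *v w) \<and> (\<forall>x. x \<bullet> (A *v x) \<le> t * (x \<bullet> (diagm d *v x)))"
  proof -
    obtain w where w: "w \<in> sphere 0 1" and wm: "\<And>y. y \<in> sphere 0 1 \<Longrightarrow> f y \<le> f w"
      using continuous_attains_sup[OF compact_sphere sphere_ne cont] by blast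
    have w0: "w \<noteq> 0" using w by auto
    define t where "t = f w"
    have le: "x \<bullet> (A *v x) \<le> t * (x \<bullet> (diagm d *v x))" for x
    proof (cases "x = 0")
      case False
      then have "f x \<le> t" using wm fx[OF False] by (simp add: t_def)
      then show ?thesis using Npos[OF False] by (simp add: f_def pos_divide_le_eq)
    qed simp
    have "(t *\<^sub>R diagm d - A) *v w = 0"
    proof (rule lagrange[OF dsym(2)])
      show "0 \<le> x \<bullet> ((t *\<^sub>R diagm d - A) *v x)" for x
        using le[of x] by (simp add: matrix_vector_mult_diff_rdistrib scaleR_matrix_vector_assoc[symmetric] inner_diff_right)
      show "w \<bullet> ((t *\<^sub>R diagm d - A) *v w) = 0"
        using Npos[OF w0] by (simp add: t_def f_def matrix_vector_mult_diff_rdistrib scaleR_matrix_vector_assoc[symmetric] inner_diff_right)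
    qed
    then have "A *v w = t *\<^sub>R (diagm d *v w)"
      by (simp add: matrix_vector_mult_diff_rdistrib scaleR_matrix_vector_assoc[symmetric])
    then show ?thesis using w0 le by blast
  qed
qed



lemma N_nonneg:
  assumes "\<And>i. d$i > (0::real)"
  shows "0 \<le> x \<bullet> (diagm d *v x)"
  using N_pos[OF assms, of x] by (cases "x = 0") auto

lemma lam_facts:
  fixes A :: "real^'n^'n"
  assumes sym: "\<And>i j. A$i$j = A$j$i" and dpos: "\<And>i. d$i > 0"
    and pd: "\<And>x. x \<noteq> 0 \<Longrightarrow> 0 < x \<bullet> (A *v x)"
  shows "0 < lambda_min (matrix_inv (diagm d) ** A)"
    and "\<And>x. lambda_min (matrix_inv (diagm d) ** A) * (x \<bullet> (diagm d *v x)) \<le> x \<bullet> (A *v x)"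
    and "0 < lambda_max (matrix_inv (diagm d) ** A)"
    and "\<And>x. x \<bullet> (A *v x) \<le> lambda_max (matrix_inv (diagm d) ** A) * (x \<bullet> (diagm d *v x))"
proof -
  have d0: "\<And>i. d$i \<noteq> 0" using dpos by (metis less_irrefl)
  define S where "S = {t. is_eigenvalue (matrix_inv (diagm d) ** A) (of_real t)}"
  have sub: "S \<subseteq> {t. \<exists>w. w \<noteq> 0 \<and> A *v w = t *\<^sub>R (diagm d *v w)}"
  proof
    fix t assume "t \<in> S"
    then obtain v :: "complex^'n" where "v \<noteq> 0" "\<And>i. (\<Sum>j\<in>UNIV. of_real (A$i$j) * v$j) = of_real t * of_real (d$i) * v$i"
      unfolding S_def eig_char[OF d0] by blast
    from extract_real[OF this] show "t \<in> {t. \<exists>w. w \<noteq> 0 \<and> A *v w = t *\<^sub>R (diagm d *v w)}" by (simp only: mem_Collect_eq)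
  qed
  have fin: "finite S" using finite_eigs[OF sym dpos] sub by (rule finite_subset[rotated])
  have pos: "t > 0" if "t \<in> S" for t
  proof -
    have "t \<in> {t. \<exists>w. w \<noteq> 0 \<and> A *v w = t *\<^sub>R (diagm d *v w)}" using sub that by (rule subsetD)
    then obtain w where w: "w \<noteq> 0" "A *v w = t *\<^sub>R (diagm d *v w)" unfolding mem_Collect_eq by (elim exE conjE)
    have "0 < w \<bullet> (A *v w)" using pd[OF w(1)] .
    also have "\<dots> = t * (w \<bullet> (diagm d *v w))" using w(2) by simp
    finally show ?thesis using N_pos[OF dpos w(1)] by (simp add: zero_less_mult_iff)
  qed
  obtain t1 w1 where t1: "w1 \<noteq> 0" "A *v w1 = t1 *\<^sub>R (diagm d *v w1)"
    and le1: "\<forall>x. t1 * (x \<bullet> (diagm d *v x)) \<le> x \<bullet> (A *v x)"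
    using extremal(1)[OF sym dpos] by blast
  obtain t2 w2 where t2: "w2 \<noteq> 0" "A *v w2 = t2 *\<^sub>R (diagm d *v w2)"
    and le2: "\<forall>x. x \<bullet> (A *v x) \<le> t2 * (x \<bullet> (diagm d *v x))"
    using extremal(2)[OF sym dpos] by blast
  have t1S: "t1 \<in> S" unfolding S_def using real_eig[OF d0 t1] by simp
  have t2S: "t2 \<in> S" unfolding S_def using real_eig[OF d0 t2] by simp
  have mn: "Min S \<in> S" "Min S \<le> t1" using fin t1S Min_in[OF fin] Min_le[OF fin] by blast+
  have mx: "Max S \<in> S" "t2 \<le> Max S" using fin t2S Max_in[OF fin] Max_ge[OF fin] by blast+
  have lmin: "lambda_min (matrix_inv (diagm d) ** A) = Min S" by (simp add: lambda_min_def S_def)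
  have lmax: "lambda_max (matrix_inv (diagm d) ** A) = Max S" by (simp add: lambda_max_def S_def)
  show "0 < lambda_min (matrix_inv (diagm d) ** A)" using pos mn lmin by simp
  show "0 < lambda_max (matrix_inv (diagm d) ** A)" using pos mx lmax by simp
  show "lambda_min (matrix_inv (diagm d) ** A) * (x \<bullet> (diagm d *v x)) \<le> x \<bullet> (A *v x)" for x
    unfolding lmin using mult_right_mono[OF mn(2) N_nonneg[OF dpos, of x]] le1 by (meson order_trans)
  show "x \<bullet> (A *v x) \<le> lambda_max (matrix_inv (diagm d) ** A) * (x \<bullet> (diagm d *v x))" for x
    unfolding lmax using mult_right_mono[OF mx(2) N_nonneg[OF dpos, of x]] le2 by (meson order_trans)
qed


lemma complex_quad:
  fixes A :: "real^'n^'n" and v :: "complex^'n"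
  assumes sym: "\<And>i j. A$i$j = A$j$i"
    and e: "\<And>i. (\<Sum>j\<in>UNIV. of_real (A$i$j) * v$j) = \<theta> * of_real (d$i) * v$i"
  defines "x \<equiv> (\<chi> i. Re (v$i))" and "y \<equiv> (\<chi> i. Im (v$i))"
  shows "of_real (x \<bullet> (A *v x) + y \<bullet> (A *v y)) = \<theta> * of_real (x \<bullet> (diagm d *v x) + y \<bullet> (diagm d *v y))"
proof -
  have "(\<Sum>i\<in>UNIV. cnj (v$i) * (\<Sum>j\<in>UNIV. of_real (A$i$j) * v$j))
      = (\<Sum>i\<in>UNIV. \<theta> * (of_real (d$i) * (cnj (v$i) * v$i)))"
    by (simp only: e) (simp add: mult_ac)
  also have "\<dots> = (\<Sum>i\<in>UNIV. \<theta> * of_real (d$i * (x$i)^2 + d$i * (y$i)^2))"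
  proof (rule sum.cong[OF refl])
    fix i
    have "cnj (v$i) * v$i = of_real ((Re (v$i))^2 + (Im (v$i))^2)"
      using complex_mult_cnj[of "v$i"] by (simp add: mult.commute)
    then show "\<theta> * (of_real (d$i) * (cnj (v$i) * v$i)) = \<theta> * of_real (d$i * (x$i)^2 + d$i * (y$i)^2)"
      by (simp add: x_def y_def distrib_left)
  qed
  also have "\<dots> = \<theta> * of_real (x \<bullet> (diagm d *v x) + y \<bullet> (diagm d *v y))"
    by (simp only: sum_distrib_left[symmetric] of_real_sum[symmetric] N_sum sum.distrib)
  finally have 1: "(\<Sum>i\<in>UNIV. cnj (v$i) * (\<Sum>j\<in>UNIV. of_real (A$i$j) * v$j)) = \<theta> * of_real (x \<bullet> (diagm d *v x) + y \<bullet> (diagm d *v y))" .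
  have swap: "(\<Sum>i\<in>UNIV. \<Sum>j\<in>UNIV. A$i$j * (Re (v$i) * Im (v$j))) = (\<Sum>i\<in>UNIV. \<Sum>j\<in>UNIV. A$i$j * (Im (v$i) * Re (v$j)))"
    by (subst sum.swap) (simp add: sym mult_ac)
  have ReT: "Re (cnj a * (of_real c * b)) = c * (Re a * Re b + Im a * Im b)" for a b :: complex and c :: real
    by (simp add: algebra_simps)
  have ImT: "Im (cnj a * (of_real c * b)) = c * (Re a * Im b) - c * (Im a * Re b)" for a b :: complex and c :: real
    by (simp add: algebra_simps)
  have "(\<Sum>i\<in>UNIV. cnj (v$i) * (\<Sum>j\<in>UNIV. of_real (A$i$j) * v$j)) = of_real (x \<bullet> (A *v x) + y \<bullet> (A *v y))"
  proof (rule complex_eqI)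
    show "Re (\<Sum>i\<in>UNIV. cnj (v$i) * (\<Sum>j\<in>UNIV. of_real (A$i$j) * v$j)) = Re (of_real (x \<bullet> (A *v x) + y \<bullet> (A *v y)))"
      unfolding bil_sum sum.distrib[symmetric]
      by (simp only: Re_sum sum_distrib_left ReT Re_complex_of_real x_def y_def vec_lambda_beta)
         (simp add: algebra_simps)
    show "Im (\<Sum>i\<in>UNIV. cnj (v$i) * (\<Sum>j\<in>UNIV. of_real (A$i$j) * v$j)) = Im (of_real (x \<bullet> (A *v x) + y \<bullet> (A *v y)))"
      using swap by (simp only: Im_sum sum_distrib_left ImT Im_complex_of_real sum_subtractf)
  qed
  with 1 show ?thesis by simp
qed



theorem lemma4p9:
  fixes \<Gamma> :: "real ^ 'n ^ 'n" and lam mu :: real and \<theta> :: complex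
  assumes sym: "transpose \<Gamma> = \<Gamma>"
    and range: "\<And>i j. 0 \<le> \<Gamma> $ i $ j \<and> \<Gamma> $ i $ j \<le> 1"
    and diag0: "\<And>i. \<Gamma> $ i $ i = 0"
    and rowpos: "\<And>i. \<exists>j. j \<noteq> i \<and> \<Gamma> $ i $ j > 0"
    and lam: "lam > 0" and mu: "mu > 0"
  defines "\<eta> \<equiv> \<Gamma> *v vec 1"
  defines "L \<equiv> diagm \<eta> - \<Gamma>"
  defines "A \<equiv> lam *\<^sub>R mat 1 + mu *\<^sub>R L"
  defines "Pa \<equiv> lam *\<^sub>R mat 1 + mu *\<^sub>R diagm \<eta>"
  defines "Pb \<equiv> diagm (\<chi> i. sqrt (\<Sum>j\<in>UNIV. (A $ i $ j)\<^sup>2))"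
  assumes eig: "is_eigenvalue (matrix_inv Pb ** A) \<theta>"
  shows "\<theta> \<in> \<real> \<and>
         (1 / sqrt 2) * lambda_min (matrix_inv Pa ** A) \<le> Re \<theta> \<and>
         Re \<theta> \<le> lambda_max (matrix_inv Pa ** A)"
proof -
  have G0: "0 \<le> \<Gamma>$i$j" for i j using range by blast
  have Gsym: "\<Gamma>$i$j = \<Gamma>$j$i" for i j
  proof -
    have "(transpose \<Gamma>)$j$i = \<Gamma>$j$i" using sym by simp
    then show ?thesis by (simp add: transpose_def)
  qed
  have eta: "\<eta>$i = (\<Sum>j\<in>UNIV. \<Gamma>$i$j)" for i
    by (simp add: \<eta>_def matrix_vector_mult_def)
  have eta0: "0 \<le> \<eta>$i" for i unfolding eta by (rule sum_nonneg) (simp add: G0)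
  define a where "a = (\<chi> i. lam + mu * \<eta>$i)"
  define b where "b = (\<chi> i. sqrt (\<Sum>j\<in>UNIV. (A $ i $ j)\<^sup>2))"
  have apos: "a$i > 0" for i using lam mu eta0[of i] by (simp add: a_def add_pos_nonneg)
  have Aij: "A$i$j = (if i = j then a$i else 0) - mu * \<Gamma>$i$j" for i j
    by (simp add: A_def L_def a_def mat_def diagm_def algebra_simps)
  have Asym: "A$i$j = A$j$i" for i j by (simp add: Aij Gsym)
  have Pa: "Pa = diagm a" by (simp add: Pa_def a_def mat_def diagm_def vec_eq_iff)
  have Pb: "Pb = diagm b" by (simp add: Pb_def b_def)
  have pd: "0 < x \<bullet> (A *v x)" if x0: "x \<noteq> 0" for x
  proof -
    have "A *v x = lam *\<^sub>R x + mu *\<^sub>R (diagm \<eta> *v x) - mu *\<^sub>R (\<Gamma> *v x)"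
      by (simp add: A_def L_def matrix_vector_mult_add_rdistrib matrix_vector_mult_diff_rdistrib
          scaleR_matrix_vector_assoc[symmetric] algebra_simps)
    then have eq: "x \<bullet> (A *v x) = lam * (x \<bullet> x) + mu * (x \<bullet> (diagm \<eta> *v x) - x \<bullet> (\<Gamma> *v x))"
      by (simp add: inner_add_right inner_diff_right right_diff_distrib)
    have "x \<bullet> (\<Gamma> *v x) = (\<Sum>i\<in>UNIV. \<Sum>j\<in>UNIV. x$i * \<Gamma>$i$j * x$j)" by (rule bil_sum)
    also have "\<dots> \<le> (\<Sum>i\<in>UNIV. \<Sum>j\<in>UNIV. \<Gamma>$i$j * (x$i)^2 / 2 + \<Gamma>$i$j * (x$j)^2 / 2)"
    proof (intro sum_mono)
      fix i j
      have "2 * (x$i * x$j) \<le> (x$i)^2 + (x$j)^2"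
        using sum_squares_bound[of "x$i" "x$j"] by (simp add: mult_ac)
      then have "\<Gamma>$i$j * (2 * (x$i * x$j)) \<le> \<Gamma>$i$j * ((x$i)^2 + (x$j)^2)"
        by (rule mult_left_mono) (simp add: G0)
      then show "x$i * \<Gamma>$i$j * x$j \<le> \<Gamma>$i$j * (x$i)^2 / 2 + \<Gamma>$i$j * (x$j)^2 / 2"
        by (simp add: algebra_simps)
    qed
    also have "\<dots> = (\<Sum>i\<in>UNIV. \<Sum>j\<in>UNIV. \<Gamma>$i$j * (x$i)^2) / 2 + (\<Sum>i\<in>UNIV. \<Sum>j\<in>UNIV. \<Gamma>$i$j * (x$j)^2) / 2"
      by (simp add: sum.distrib sum_divide_distrib)
    also have "(\<Sum>i\<in>UNIV. \<Sum>j\<in>UNIV. \<Gamma>$i$j * (x$j)^2) = (\<Sum>i\<in>UNIV. \<Sum>j\<in>UNIV. \<Gamma>$i$j * (x$i)^2)"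
      by (subst sum.swap) (simp add: Gsym)
    also have "(\<Sum>i\<in>UNIV. \<Sum>j\<in>UNIV. \<Gamma>$i$j * (x$i)^2) = x \<bullet> (diagm \<eta> *v x)"
      by (simp add: N_sum eta sum_distrib_right)
    finally have "x \<bullet> (\<Gamma> *v x) \<le> x \<bullet> (diagm \<eta> *v x)" by simp
    moreover have "0 < x \<bullet> x" using x0 by simp
    ultimately show ?thesis unfolding eq using lam mu
      by (simp add: add_pos_nonneg)
  qed
  have rowsum: "(\<Sum>j\<in>UNIV. (A$i$j)^2) = (a$i)^2 + mu^2 * (\<Sum>j\<in>UNIV. (\<Gamma>$i$j)^2)" for i
  proof -
    have "(A$i$j)^2 = (if i = j then (a$i)^2 else 0) + mu^2 * (\<Gamma>$i$j)^2" for j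
      by (cases "i = j") (simp_all add: Aij diag0 power2_eq_square algebra_simps)
    then show ?thesis by (simp add: sum.distrib sum_distrib_left)
  qed
  have sqG: "(\<Sum>j\<in>UNIV. (\<Gamma>$i$j)^2) \<le> (\<eta>$i)^2" for i
  proof -
    have "(\<Sum>j\<in>UNIV. (\<Gamma>$i$j)^2) \<le> (\<Sum>j\<in>UNIV. \<Gamma>$i$j * \<eta>$i)"
    proof (rule sum_mono)
      fix j
      have "\<Gamma>$i$j \<le> \<eta>$i" unfolding eta by (rule member_le_sum) (auto simp: G0)
      then show "(\<Gamma>$i$j)^2 \<le> \<Gamma>$i$j * \<eta>$i"
        by (simp add: power2_eq_square mult_left_mono G0)
    qed
    also have "\<dots> = (\<eta>$i)^2" by (simp add: eta sum_distrib_right power2_eq_square)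
    finally show ?thesis .
  qed
  have b_lo: "a$i \<le> b$i" for i
  proof -
    have "(a$i)^2 \<le> (\<Sum>j\<in>UNIV. (A$i$j)^2)" unfolding rowsum by (simp add: sum_nonneg)
    then have "sqrt ((a$i)^2) \<le> b$i" unfolding b_def by (simp only: vec_lambda_beta real_sqrt_le_iff)
    then show ?thesis using apos[of i] by simp
  qed
  have b_hi: "b$i \<le> sqrt 2 * a$i" for i
  proof -
    have "mu * \<eta>$i \<le> a$i" using lam by (simp add: a_def)
    then have "(mu * \<eta>$i)^2 \<le> (a$i)^2" using mu eta0[of i] by (intro power_mono) simp_all
    moreover have "mu^2 * (\<Sum>j\<in>UNIV. (\<Gamma>$i$j)^2) \<le> mu^2 * (\<eta>$i)^2"
      using sqG[of i] by (simp add: mult_left_mono)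
    ultimately have "(\<Sum>j\<in>UNIV. (A$i$j)^2) \<le> 2 * (a$i)^2"
      unfolding rowsum by (simp add: power_mult_distrib)
    then have "b$i \<le> sqrt (2 * (a$i)^2)" unfolding b_def by (simp only: vec_lambda_beta real_sqrt_le_iff)
    then show ?thesis using apos[of i] by (simp add: real_sqrt_mult)
  qed
  have bpos: "b$i > 0" for i using b_lo[of i] apos[of i] by linarith
  have b0: "b$i \<noteq> 0" for i using bpos[of i] by simp
  have Nab: "x \<bullet> (diagm a *v x) \<le> x \<bullet> (diagm b *v x)" for x
    unfolding N_sum by (intro sum_mono mult_right_mono b_lo) simp
  have Nba: "x \<bullet> (diagm b *v x) \<le> sqrt 2 * (x \<bullet> (diagm a *v x))" for x
    unfolding N_sum sum_distrib_left
    by (intro sum_mono) (simp add: mult.assoc[symmetric] mult_right_mono b_hi)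
  note LF = lam_facts[OF Asym apos pd]
  define lmin where "lmin = lambda_min (matrix_inv Pa ** A)"
  define lmax where "lmax = lambda_max (matrix_inv Pa ** A)"
  have lmin0: "0 < lmin" and lmax0: "0 < lmax" using LF(1,3) by (simp_all add: lmin_def lmax_def Pa)
  have Qlo: "lmin * (x \<bullet> (diagm a *v x)) \<le> x \<bullet> (A *v x)" for x using LF(2) by (simp add: lmin_def Pa)
  have Qhi: "x \<bullet> (A *v x) \<le> lmax * (x \<bullet> (diagm a *v x))" for x using LF(4) by (simp add: lmax_def Pa)
  have Qlo2: "(1 / sqrt 2) * lmin * (x \<bullet> (diagm b *v x)) \<le> x \<bullet> (A *v x)" for x
  proof -
    have "(1 / sqrt 2) * lmin * (x \<bullet> (diagm b *v x)) \<le> (1 / sqrt 2) * lmin * (sqrt 2 * (x \<bullet> (diagm a *v x)))"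
      using Nba[of x] lmin0 by (intro mult_left_mono) simp_all
    also have "\<dots> = lmin * (x \<bullet> (diagm a *v x))" by simp
    finally show ?thesis using Qlo[of x] by linarith
  qed
  have Qhi2: "x \<bullet> (A *v x) \<le> lmax * (x \<bullet> (diagm b *v x))" for x
    using Qhi[of x] mult_left_mono[OF Nab[of x], of lmax] lmax0 by linarith
  obtain v :: "complex^'n" where v0: "v \<noteq> 0" and e: "\<And>i. (\<Sum>j\<in>UNIV. of_real (A$i$j) * v$j) = \<theta> * of_real (b$i) * v$i"
    using eig unfolding Pb eig_char[OF b0] by blast
  define x where "x = (\<chi> i. Re (v$i))"
  define y where "y = (\<chi> i. Im (v$i))"
  have cq: "of_real (x \<bullet> (A *v x) + y \<bullet> (A *v y)) = \<theta> * of_real (x \<bullet> (diagm b *v x) + y \<bullet> (diagm b *v y))"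
    unfolding x_def y_def by (rule complex_quad[OF Asym e])
  have "x \<noteq> 0 \<or> y \<noteq> 0"
  proof (rule ccontr)
    assume "\<not> ?thesis"
    then have "v = 0" by (auto simp: vec_eq_iff x_def y_def complex_eq_iff)
    then show False using v0 by simp
  qed
  then have Npos: "0 < x \<bullet> (diagm b *v x) + y \<bullet> (diagm b *v y)"
    using N_pos[OF bpos] N_nonneg[OF bpos] by (metis add_pos_nonneg add_nonneg_pos)
  define Nn where "Nn = x \<bullet> (diagm b *v x) + y \<bullet> (diagm b *v y)"
  define Qq where "Qq = x \<bullet> (A *v x) + y \<bullet> (A *v y)"
  have th: "\<theta> = of_real (Qq / Nn)"
    using cq Npos unfolding Nn_def[symmetric] Qq_def[symmetric]
    by (simp add: field_simps del: of_real_add)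
  have "(1 / sqrt 2) * lmin * Nn \<le> Qq"
    using Qlo2[of x] Qlo2[of y] unfolding Nn_def Qq_def by (simp add: algebra_simps)
  then have lo: "(1 / sqrt 2) * lmin \<le> Qq / Nn" using Npos unfolding Nn_def[symmetric]
    by (simp add: pos_le_divide_eq)
  have "Qq \<le> lmax * Nn"
    using Qhi2[of x] Qhi2[of y] unfolding Nn_def Qq_def by (simp add: algebra_simps)
  then have hi: "Qq / Nn \<le> lmax" using Npos unfolding Nn_def[symmetric]
    by (simp add: pos_divide_le_eq)
  show ?thesis using lo hi th by (simp add: lmin_def lmax_def)
qed


end
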